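(* In the standard LLP setup, for every $N\ge1$: $L(G,\gamma^N_{optm})\supseteq L(G,\gamma^{N+1}_{optm})$.
   Context: Standard LLP setup. $\Sigma=\Sigma_c\,\dot\cup\,\Sigma_{uc}$ is a finite alphabet partitioned into controllable and uncontrollable events. The plant $G$ has generated language $L(G)\subseteq\Sigma^*$ and marked language $L_m(G)\subseteq L(G)$ with $L(G)=\overline{L_m(G)}$, where $\overline{M}$ denotes the set of all prefixes of strings in $M$. The legal language $K\subseteq L_m(G)$ satisfies $K=\overline{K}\cap L_m(G)$. For a prefix-closed language $L$, a language $M$ is controllable w.r.t. $L$ if $\overline{M}\Sigma_{uc}\cap L\subseteq\overline{M}$. For a language $L$ and $s\in\Sigma^*$: $L/s=\{t\in\Sigma^*: st\in L\}$; $L|_N=\{t\in L: |t|\le N\}$; $\Sigma_{L(G)}(s)=\{\sigma\in\Sigma: s\sigma\in L(G)\}$. For $M\subseteq\Sigma^*$, $M^{\uparrow/s|_N}$ denotes the supremal sublanguage of $M$ controllable w.r.t. $L(G)/s|_N$. The optimistic attitude gives $f^N_{optm}(s)=[K/s|_N\cup(\overline{K}/s|_N\setminus\overline{K}/s|_{N-1})]^{\uparrow/s|_N}$, and the LLP control policy is $\gamma^N_{optm}(s)=(\overline{f^N_{optm}(s)}\cap\Sigma)\cup(\Sigma_{uc}\cap\Sigma_{L(G)}(s))$. For a control policy $\gamma:\Sigma^*\to2^\Sigma$, $L(G,\gamma)$ is defined by $\epsilon\in L(G,\gamma)$ and $s\sigma\in L(G,\gamma)$ iff $s\in L(G,\gamma)$,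 $s\sigma\in L(G)$, $\sigma\in\gamma(s)$. *)

theory Defs
  imports Main
begin

text \<open>Strings over the alphabet 'a are lists; the alphabet is the (finite) type 'a,
  partitioned into uncontrollable events Sigma_uc and controllable events UNIV - Sigma_uc.\<close>

definition pref :: "'a list set \<Rightarrow> 'a list set" where
  "pref M = {s. \<exists>t. s @ t \<in> M}"

definition quot :: "'a list set \<Rightarrow> 'a list \<Rightarrow> 'a list set" where
  "quot L s = {t. s @ t \<in> L}"

definition trunc :: "'a list set \<Rightarrow> nat \<Rightarrow> 'a list set" where
  "trunc L N = {t \<in> L. length t \<le> N}"

definition controllable :: "'a set \<Rightarrow> 'a list set \<Rightarrow> 'a list set \<Rightarrow> bool" where
  "controllable Sigma_uc M L \<longleftrightarrow> (\<forall>s \<in> pref M. \<forall>\<sigma> \<in> Sigma_uc. s @ [\<sigma>] \<in> L \<longrightarrow> s @ [\<sigma>] \<in> pref M)"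

definition supC :: "'a set \<Rightarrow> 'a list set \<Rightarrow> 'a list set \<Rightarrow> 'a list set" where
  "supC Sigma_uc M L = \<Union>{M'. M' \<subseteq> M \<and> controllable Sigma_uc M' L}"

definition f_optm :: "'a set \<Rightarrow> 'a list set \<Rightarrow> 'a list set \<Rightarrow> nat \<Rightarrow> 'a list \<Rightarrow> 'a list set" where
  "f_optm Sigma_uc LG K N s =
     supC Sigma_uc (trunc (quot K s) N \<union> (trunc (quot (pref K) s) N - trunc (quot (pref K) s) (N - 1)))
              (trunc (quot LG s) N)"

definition gamma_optm :: "'a set \<Rightarrow> 'a list set \<Rightarrow> 'a list set \<Rightarrow> nat \<Rightarrow> 'a list \<Rightarrow> 'a set" where
  "gamma_optm Sigma_uc LG K N s =
     {\<sigma>. [\<sigma>] \<in> pref (f_optm Sigma_uc LG K N s)} \<union> (Sigma_uc \<inter> {\<sigma>. s @ [\<sigma>] \<in> LG})"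

inductive_set closed_loop :: "'a list set \<Rightarrow> ('a list \<Rightarrow> 'a set) \<Rightarrow> 'a list set"
  for LG :: "'a list set" and \<gamma> :: "'a list \<Rightarrow> 'a set" where
  Nil: "[] \<in> closed_loop LG \<gamma>"
| snoc: "s \<in> closed_loop LG \<gamma> \<Longrightarrow> s @ [\<sigma>] \<in> LG \<Longrightarrow> \<sigma> \<in> \<gamma> s \<Longrightarrow> s @ [\<sigma>] \<in> closed_loop LG \<gamma>"

end

theory Submission
  imports Defs
begin

lemma key:
  fixes Sigma_uc :: "'a set"
  assumes N: "N \<ge> 1" and u: "[\<sigma>] \<in> pref (f_optm Sigma_uc LG K (N+1) s)"
  shows "[\<sigma>] \<in> pref (f_optm Sigma_uc LG K N s)"
proof -
  define MN where "MN = trunc (quot K s) N \<union> (trunc (quot (pref K) s) N - trunc (quot (pref K) s) (N - 1))"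
  define MS where "MS = trunc (quot K s) (N+1) \<union> (trunc (quot (pref K) s) (N+1) - trunc (quot (pref K) s) N)"
  from u obtain w where "[\<sigma>] @ w \<in> f_optm Sigma_uc LG K (N+1) s" by (auto simp: pref_def)
  then obtain M' where M'sub: "M' \<subseteq> MS" and M'c: "controllable Sigma_uc M' (trunc (quot LG s) (N+1))"
     and sw: "[\<sigma>] @ w \<in> M'"
    by (auto simp: f_optm_def supC_def MS_def)
  define M'' where "M'' = {u \<in> pref M'. length u \<le> N \<and> (s @ u \<in> K \<or> length u = N)}"
  have pp: "x \<in> pref M'" if "x \<in> pref M''" for x
  proof -
    from that obtain y w where "x @ w = y" "y \<in> M''" unfolding pref_def by blast
    then obtain z where "y @ z \<in> M'" unfolding M''_def pref_def by blast
    hence "x @ (w @ z) \<in> M'" using \<open>x @ w = y\<close> by (metis append.assoc)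
    thus ?thesis unfolding pref_def by blast
  qed
  have Kp: "K \<subseteq> pref K" by (auto simp: pref_def intro: exI[of _ "[]"])
  have lem: "u \<in> pref M''" if "u \<in> pref M'" "length u \<le> N" for u
  proof -
    from that obtain w where x: "u @ w \<in> M'" by (auto simp: pref_def)
    show ?thesis
    proof (cases "length (u @ w) \<ge> N")
      case True
      have "take N (u @ w) @ drop N (u @ w) \<in> M'" using x by (simp only: append_take_drop_id)
      hence "take N (u @ w) \<in> pref M'" unfolding pref_def by blast
      hence "take N (u @ w) \<in> M''" using True by (auto simp: M''_def)
      moreover have "take N (u @ w) = u @ take (N - length u) w" using that(2) by simp
      ultimately show ?thesis unfolding pref_def by (metis (mono_tags, lifting) mem_Collect_eq)
    next
      case False
      have "u @ w \<in> MS" using x M'sub by blast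
      hence "s @ u @ w \<in> K" using False unfolding MS_def trunc_def quot_def by auto
      moreover have "u @ w \<in> pref M'" using x unfolding pref_def by (metis append_Nil2 mem_Collect_eq)
      ultimately have "u @ w \<in> M''" using False unfolding M''_def by auto
      thus ?thesis unfolding pref_def by (metis append_Nil2 mem_Collect_eq)
    qed
  qed
  have sub: "M'' \<subseteq> MN"
  proof
    fix x assume x: "x \<in> M''"
    then obtain w where "x @ w \<in> M'" by (auto simp: M''_def pref_def)
    hence "x @ w \<in> MS" using M'sub by blast
    hence "s @ x @ w \<in> pref K" using Kp unfolding MS_def trunc_def quot_def by auto
    hence "s @ x \<in> pref K" by (auto simp: pref_def)
    thus "x \<in> MN" using x N by (auto simp: MN_def M''_def trunc_def quot_def)
  qed
  have ctrl: "controllable Sigma_uc M'' (trunc (quot LG s) N)"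
    unfolding controllable_def
  proof (intro ballI impI)
    fix v \<tau> assume v: "v \<in> pref M''" and t: "\<tau> \<in> Sigma_uc" and vt: "v @ [\<tau>] \<in> trunc (quot LG s) N"
    have "v \<in> pref M'" using pp v by blast
    moreover have "v @ [\<tau>] \<in> trunc (quot LG s) (N+1)" using vt by (auto simp: trunc_def)
    ultimately have "v @ [\<tau>] \<in> pref M'" using M'c t by (auto simp: controllable_def)
    moreover have "length (v @ [\<tau>]) \<le> N" using vt unfolding trunc_def by blast
    ultimately show "v @ [\<tau>] \<in> pref M''" by (rule lem)
  qed
  have "[\<sigma>] \<in> pref M'" using sw by (auto simp: pref_def)
  hence "[\<sigma>] \<in> pref M''" using lem N by simp
  moreover have "M'' \<subseteq> f_optm Sigma_uc LG K N s"
    using sub ctrl by (auto simp: f_optm_def supC_def MN_def)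
  ultimately show ?thesis by (auto simp: pref_def)
qed

theorem theorem2:
  fixes Sigma_uc :: "('a::finite) set" and LG Lm K :: "'a list set" and N :: nat
  assumes "Lm \<subseteq> LG" and "LG = pref Lm"
    and "K \<subseteq> Lm" and "K = pref K \<inter> Lm"
    and "N \<ge> 1"
  shows "closed_loop LG (gamma_optm Sigma_uc LG K (N + 1)) \<subseteq> closed_loop LG (gamma_optm Sigma_uc LG K N)"
proof
  fix x assume "x \<in> closed_loop LG (gamma_optm Sigma_uc LG K (N + 1))"
  thus "x \<in> closed_loop LG (gamma_optm Sigma_uc LG K N)"
  proof induction
    case Nil
    then show ?case by (rule closed_loop.Nil)
  next
    case (snoc s \<sigma>)
    have k: "[\<sigma>] \<in> pref (f_optm Sigma_uc LG K (N+1) s) \<Longrightarrow> [\<sigma>] \<in> pref (f_optm Sigma_uc LG K N s)"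
      by (rule key[OF assms(5)])
    have "\<sigma> \<in> gamma_optm Sigma_uc LG K N s"
    proof -
      have "\<sigma> \<in> {\<sigma>. [\<sigma>] \<in> pref (f_optm Sigma_uc LG K (N+1) s)} \<union> (Sigma_uc \<inter> {\<sigma>. s @ [\<sigma>] \<in> LG})"
        using snoc(3) unfolding gamma_optm_def .
      hence "[\<sigma>] \<in> pref (f_optm Sigma_uc LG K (N+1) s) \<or> \<sigma> \<in> (Sigma_uc \<inter> {\<sigma>. s @ [\<sigma>] \<in> LG})"
        by blast
      hence "[\<sigma>] \<in> pref (f_optm Sigma_uc LG K N s) \<or> \<sigma> \<in> (Sigma_uc \<inter> {\<sigma>. s @ [\<sigma>] \<in> LG})"
        using k by blast
      thus ?thesis unfolding gamma_optm_def by blast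
    qed
    then show ?case by (rule closed_loop.snoc[OF snoc(4) snoc(2)])
  qed
qed

end
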